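(* There is an absolute constant $\alpha>0$ such that for every integer $k>5$ there exists a $k$-terminal network $(G,c)$ such that every mimicking network $(G',c')$ of $(G,c)$ satisfies $|V(G')|\ge 2^{\alpha k}$. Moreover, $G$ can be taken to be bipartite with all the terminals on one side of the bipartition and all the non-terminals on the other side.
   Context: A network $(G,c)$ is an undirected graph $G$ with edge costs $c:E(G)\to\mathbb{R}^+$; its size is $|V(G)|$. A $k$-terminal network additionally has a set $Q=\{q_1,\dots,q_k\}\subseteq V(G)$ of distinguished vertices called terminals. For $S\subset Q$ with $S\neq\emptyset,Q$, write $\bar S=Q\setminus S$; a cut $(W,V(G)\setminus W)$ is $S$-separating if $W\cap Q\in\{S,\bar S\}$. The cost of a cut is the total cost of the edges with exactly one endpoint in $W$ (the cutset). $\mathrm{mincut}_{G,c}(S,\bar S)$ denotes the minimum cost of an $S$-separating cut. A mimicking network of a $k$-terminal network $(G,c)$ is a $k$-terminal network $(G',c')$ with the same terminal set $Q$ such that $\mathrm{mincut}_{G',c'}(S,\bar S)=\mathrm{mincut}_{G,c}(S,\bar S)$ for every $S\subset Q$ with $S\neq\emptyset,Q$. *)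

theory Defs
  imports Complex_Main
begin

definition network :: "'a set \<Rightarrow> 'a set set \<Rightarrow> ('a set \<Rightarrow> real) \<Rightarrow> bool" where
  "network V E c \<longleftrightarrow> finite V \<and>
     (\<forall>e\<in>E. \<exists>u v. e = {u, v} \<and> u \<noteq> v \<and> u \<in> V \<and> v \<in> V) \<and>
     (\<forall>e\<in>E. c e > 0)"

definition cut_cost :: "'a set set \<Rightarrow> ('a set \<Rightarrow> real) \<Rightarrow> 'a set \<Rightarrow> real" where
  "cut_cost E c W = (\<Sum>e\<in>{e\<in>E. card (e \<inter> W) = 1}. c e)"

definition separating :: "'a set \<Rightarrow> 'a set \<Rightarrow> 'a set \<Rightarrow> 'a set \<Rightarrow> bool" where
  "separating V Q S W \<longleftrightarrow> W \<subseteq> V \<and> (W \<inter> Q = S \<or> W \<inter> Q = Q - S)"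

definition mincut :: "'a set \<Rightarrow> 'a set set \<Rightarrow> ('a set \<Rightarrow> real) \<Rightarrow> 'a set \<Rightarrow> 'a set \<Rightarrow> real" where
  "mincut V E c Q S = Min (cut_cost E c ` {W. separating V Q S W})"

definition mimicking ::
  "'a set \<Rightarrow> 'a set set \<Rightarrow> ('a set \<Rightarrow> real) \<Rightarrow> 'a set \<Rightarrow>
   'a set \<Rightarrow> 'a set set \<Rightarrow> ('a set \<Rightarrow> real) \<Rightarrow> bool" where
  "mimicking V E c Q V' E' c' \<longleftrightarrow> network V' E' c' \<and> Q \<subseteq> V' \<and>
     (\<forall>S. S \<subseteq> Q \<and> S \<noteq> {} \<and> S \<noteq> Q \<longrightarrow> mincut V' E' c' Q S = mincut V E c Q S)"

end

theory Submission
  imports Defs "HOL-Analysis.Continuum_Not_Denumerable"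
begin


definition qscale :: "rat \<Rightarrow> real \<Rightarrow> real" where "qscale q x = of_rat q * x"

interpretation Q: vector_space qscale
  by unfold_locales (auto simp: qscale_def algebra_simps of_rat_add of_rat_mult)

lemma countable_Qspan: "finite S \<Longrightarrow> countable (Q.span S)"
proof (induction S rule: finite_induct)
  case empty then show ?case by simp
next
  case (insert a S)
  have "Q.span (insert a S) \<subseteq> (\<lambda>(x,q). x + qscale q a) ` (Q.span S \<times> UNIV)"
  proof
    fix x assume "x \<in> Q.span (insert a S)"
    then obtain q where "x - qscale q a \<in> Q.span S" unfolding Q.span_insert by auto
    then show "x \<in> (\<lambda>(x,q). x + qscale q a) ` (Q.span S \<times> UNIV)"
      by (auto intro!: image_eqI[of _ _ "(x - qscale q a, q)"])
  qed
  moreover have "countable ((\<lambda>(x,q). x + qscale q a) ` (Q.span S \<times> (UNIV::rat set)))"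
    using insert by auto
  ultimately show ?case by (rule countable_subset)
qed

lemma choose_indep:
  fixes lo :: "nat \<Rightarrow> real"
  assumes "finite J"
  shows "\<exists>p. inj_on p J \<and> Q.independent (p ` J) \<and> (\<forall>j\<in>J. lo j < p j \<and> p j < lo j + 1)"
  using assms
proof (induction J rule: finite_induct)
  case empty then show ?case by (auto simp: Q.independent_empty)
next
  case (insert i J)
  then obtain p where p: "inj_on p J" "Q.independent (p ` J)" "\<forall>j\<in>J. lo j < p j \<and> p j < lo j + 1"
    by blast
  have "countable (Q.span (p ` J))" using insert by (intro countable_Qspan) auto
  moreover have "uncountable {lo i<..<lo i + 1}" by (simp add: uncountable_open_interval)
  ultimately obtain y where y: "y \<in> {lo i<..<lo i + 1}" "y \<notin> Q.span (p ` J)"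
    by (metis countable_subset subsetI)
  define p' where "p' = p(i := y)"
  have img: "p' ` J = p ` J" using insert unfolding p'_def by auto
  have ynot: "y \<notin> p ` J" using y(2) Q.span_base by blast
  have "inj_on p' (insert i J)" using p(1) ynot insert(2) img
    unfolding p'_def by (auto simp: inj_on_def)
  moreover have "p' ` insert i J = insert y (p ` J)" using img image_insert[of p' i J] by (simp add: p'_def)
  moreover have "Q.independent (insert y (p ` J))"
    using p(2) y(2) by (intro Q.independent_insertI)
  moreover have "\<forall>j\<in>insert i J. lo j < p' j \<and> p' j < lo j + 1"
    using p(3) y(1) insert(2) by (auto simp: p'_def)
  ultimately show ?case by metis
qed

lemma bits_differ:
  fixes j j' :: nat
  assumes "j < 2^m" "j' < 2^m" "j \<noteq> j'"
  shows "\<exists>i<m. bit j i \<noteq> bit j' i"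
proof (rule ccontr)
  assume "\<not> ?thesis"
  then have "\<forall>i<m. bit j i = bit j' i" by blast
  moreover have "take_bit m j = j" "take_bit m j' = j'" using assms by (simp_all add: take_bit_nat_eq_self_iff)
  ultimately have "\<forall>n. bit j n = bit j' n" by (metis bit_take_bit_iff)
  then show False using assms(3) bit_eq_iff by blast
qed

definition mm :: "nat \<Rightarrow> nat" where "mm k = (k - 1) div 2"
definition TT :: "nat \<Rightarrow> nat \<Rightarrow> nat set" where
  "TT k j = {t. 1 \<le> t \<and> t \<le> 2 * mm k \<and> (bit j ((t - 1) div 2) \<longleftrightarrow> even t)}"
definition NN :: "nat \<Rightarrow> nat \<Rightarrow> nat set" where "NN k j = insert 0 (TT k j)"
definition JJ :: "nat \<Rightarrow> nat set" where "JJ k = {..<2 ^ mm k}"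
definition GE :: "nat \<Rightarrow> nat set set" where
  "GE k = (\<lambda>(j, t). {t, k + j}) ` Sigma (JJ k) (NN k)"
definition Gc :: "nat \<Rightarrow> (nat \<Rightarrow> real) \<Rightarrow> nat set \<Rightarrow> real" where
  "Gc k a e = (if 0 \<in> e then a (Max e - k) else 1)"

lemma TT_sub: "TT k j \<subseteq> {1..2 * mm k}" by (auto simp: TT_def)
lemma TT_finite[simp]: "finite (TT k j)" using TT_sub finite_subset by blast
lemma TT_lt: "t \<in> TT k j \<Longrightarrow> t < k" "t \<in> TT k j \<Longrightarrow> t \<noteq> 0"
  by (auto simp: TT_def mm_def)
lemma NN_lt: "t \<in> NN k j \<Longrightarrow> k > 0 \<Longrightarrow> t < k"
  using TT_lt by (auto simp: NN_def)
lemma NN_finite[simp]: "finite (NN k j)" by (simp add: NN_def)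

lemma TT_mem: "i < mm k \<Longrightarrow> (if bit j i then 2*i+2 else 2*i+1) \<in> TT k j"
  by (auto simp: TT_def)
lemma TT_mem2: "i < mm k \<Longrightarrow> (if bit j i then 2*i+2 else 2*i+1) \<in> TT k j' \<longleftrightarrow> bit j' i = bit j i"
  by (auto simp: TT_def)

lemma TT_ne: "k > 5 \<Longrightarrow> TT k j \<noteq> {}"
  using TT_mem[of 0 k j] by (auto simp: mm_def)

lemma TT_notsub: "j \<in> JJ k \<Longrightarrow> j' \<in> JJ k \<Longrightarrow> j \<noteq> j' \<Longrightarrow> \<not> TT k j \<subseteq> TT k j'"
proof
  assume "j \<in> JJ k" "j' \<in> JJ k" "j \<noteq> j'" "TT k j \<subseteq> TT k j'"
  then obtain i where "i < mm k" "bit j i \<noteq> bit j' i" using bits_differ[of j "mm k" j'] by (auto simp: JJ_def)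
  then show False using TT_mem[of i k j] TT_mem2[of i k j j'] \<open>TT k j \<subseteq> TT k j'\<close> by auto
qed

lemma GE_inj: "k > 0 \<Longrightarrow> inj_on (\<lambda>(j, t). {t, k + j}) (Sigma (JJ k) (NN k))"
  unfolding inj_on_def
  by (auto simp: doubleton_eq_iff dest: NN_lt)

lemma cut_cost_GE:
  assumes "k > 0"
  shows "cut_cost (GE k) (Gc k a) W =
    (\<Sum>j\<in>JJ k. \<Sum>t\<in>NN k j. if (t \<in> W) \<noteq> (k + j \<in> W) then Gc k a {t, k + j} else 0)"
proof -
  let ?f = "\<lambda>(j, t). {t, k + j}"
  let ?P = "Sigma (JJ k) (NN k)"
  have fin: "finite ?P" by (auto simp: JJ_def)
  have "{e \<in> GE k. card (e \<inter> W) = 1} = ?f ` {x \<in> ?P. card (?f x \<inter> W) = 1}"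
    unfolding GE_def by auto
  then have "cut_cost (GE k) (Gc k a) W = (\<Sum>x\<in>{x \<in> ?P. card (?f x \<inter> W) = 1}. Gc k a (?f x))"
    unfolding cut_cost_def
    by (simp add: sum.reindex inj_on_subset[OF GE_inj[OF assms]])
  also have "\<dots> = (\<Sum>x\<in>?P. if card (?f x \<inter> W) = 1 then Gc k a (?f x) else 0)"
    using fin by (simp add: sum.inter_filter)
  also have "\<dots> = (\<Sum>x\<in>?P. (\<lambda>(j,t). if (t \<in> W) \<noteq> (k + j \<in> W) then Gc k a {t, k + j} else 0) x)"
  proof (rule sum.cong[OF refl])
    fix x assume "x \<in> ?P"
    then obtain j t where x: "x = (j, t)" "t < k" using NN_lt assms by auto
    then have ne: "t \<noteq> k + j" by simp
    have "card ({t, k + j} \<inter> W) = 1 \<longleftrightarrow> (t \<in> W) \<noteq> (k + j \<in> W)"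
      using ne by (cases "t \<in> W"; cases "k + j \<in> W") (auto simp: Int_insert_left)
    then show "(if card (?f x \<inter> W) = 1 then Gc k a (?f x) else 0) =
      (\<lambda>(j,t). if (t \<in> W) \<noteq> (k + j \<in> W) then Gc k a {t, k + j} else 0) x"
      using x by simp
  qed
  also have "\<dots> = (\<Sum>j\<in>JJ k. \<Sum>t\<in>NN k j. if (t \<in> W) \<noteq> (k + j \<in> W) then Gc k a {t, k + j} else 0)"
    by (subst sum.Sigma) (auto simp: JJ_def)
  finally show ?thesis .
qed

lemma Gc0: "k > 0 \<Longrightarrow> Gc k a {0, k + j} = a j"
  by (simp add: Gc_def)
lemma Gc1: "t \<in> TT k j \<Longrightarrow> k > 0 \<Longrightarrow> Gc k a {t, k + j} = 1"
  using TT_lt[of t k j] by (simp add: Gc_def)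

lemma sum_ind_card: "finite A \<Longrightarrow> (\<Sum>t\<in>A. if P t then (1::real) else 0) = real (card {t\<in>A. P t})"
  by (simp add: sum.inter_filter[symmetric])

lemma pcost:
  assumes k: "k > 5" and hW: "\<forall>t<k. t \<in> W \<longleftrightarrow> (s \<longleftrightarrow> t \<notin> TT k Y)"
  shows "(\<Sum>t\<in>NN k j. if (t \<in> W) \<noteq> (k + j \<in> W) then Gc k a {t, k + j} else 0) =
    (if (k + j \<in> W) = s then real (card (TT k j \<inter> TT k Y)) else a j + real (card (TT k j - TT k Y)))"
proof -
  have z: "0 \<notin> TT k j" "0 \<notin> TT k Y" using TT_lt by blast+
  have w0: "0 \<in> W \<longleftrightarrow> s" using hW k z by auto
  have "(\<Sum>t\<in>NN k j. if (t \<in> W) \<noteq> (k + j \<in> W) then Gc k a {t, k + j} else 0) =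
     (if (0 \<in> W) \<noteq> (k + j \<in> W) then a j else 0) +
     (\<Sum>t\<in>TT k j. if (t \<in> W) \<noteq> (k + j \<in> W) then 1 else 0)"
  proof -
    have "(\<Sum>t\<in>TT k j. if (t \<in> W) \<noteq> (k + j \<in> W) then Gc k a {t, k + j} else 0) =
       (\<Sum>t\<in>TT k j. if (t \<in> W) \<noteq> (k + j \<in> W) then 1 else 0)"
      by (rule sum.cong) (use k in \<open>auto simp: Gc1\<close>)
    then show ?thesis unfolding NN_def using z k by (simp add: Gc0)
  qed
  also have "(\<Sum>t\<in>TT k j. if (t \<in> W) \<noteq> (k + j \<in> W) then (1::real) else 0) =
      real (card {t\<in>TT k j. (t \<in> W) \<noteq> (k + j \<in> W)})"
    by (rule sum_ind_card) simp
  also have "{t\<in>TT k j. (t \<in> W) \<noteq> (k + j \<in> W)} =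
     (if (k + j \<in> W) = s then TT k j \<inter> TT k Y else TT k j - TT k Y)"
    using hW TT_lt(1)[of _ k j] by auto
  finally show ?thesis using w0 by auto
qed

lemma mincut_G:
  assumes k: "k > 5" and Y: "Y \<in> JJ k"
    and ab: "\<forall>j\<in>JJ k. real (card (TT k j)) - 1 < a j \<and> a j < real (card (TT k j))"
  shows "mincut {..<k + 2 ^ mm k} (GE k) (Gc k a) {..<k} (TT k Y) =
     a Y + (\<Sum>j\<in>JJ k - {Y}. real (card (TT k j \<inter> TT k Y)))"
proof -
  define V where "V = {..<k + 2 ^ mm k}"
  define Q where "Q = {..<k::nat}"
  define h where "h j = min (real (card (TT k j \<inter> TT k Y))) (a j + real (card (TT k j - TT k Y)))" for j
  have hY: "h Y = a Y" using ab Y by (auto simp: h_def)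
  have hj: "h j = real (card (TT k j \<inter> TT k Y))" if "j \<in> JJ k" "j \<noteq> Y" for j
  proof -
    have "TT k j \<inter> TT k Y \<subset> TT k j" using TT_notsub[OF that(1) Y that(2)] by blast
    then have "card (TT k j \<inter> TT k Y) < card (TT k j)" by (simp add: psubset_card_mono)
    then have "real (card (TT k j \<inter> TT k Y)) \<le> real (card (TT k j)) - 1" by linarith
    then show ?thesis using ab that(1) by (auto simp: h_def)
  qed
  have finJ: "finite (JJ k)" by (simp add: JJ_def)
  have sumh: "(\<Sum>j\<in>JJ k. h j) = a Y + (\<Sum>j\<in>JJ k - {Y}. real (card (TT k j \<inter> TT k Y)))"
    using finJ Y by (simp add: sum.remove hY hj)
  have cc: "cut_cost (GE k) (Gc k a) W = (\<Sum>j\<in>JJ k. if (k + j \<in> W) = s then real (card (TT k j \<inter> TT k Y))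
      else a j + real (card (TT k j - TT k Y)))"
    if hW: "\<forall>t<k. t \<in> W \<longleftrightarrow> (s \<longleftrightarrow> t \<notin> TT k Y)" for W s
  proof -
    have k0: "k > 0" using k by simp
    show ?thesis unfolding cut_cost_GE[OF k0] by (rule sum.cong[OF refl], rule pcost[OF k hW])
  qed
  have lower: "(\<Sum>j\<in>JJ k. h j) \<le> cut_cost (GE k) (Gc k a) W" if "separating V Q (TT k Y) W" for W
  proof -
    have TQ: "TT k Y \<subseteq> Q" using TT_lt unfolding Q_def by auto
    obtain s where hW: "\<forall>t<k. t \<in> W \<longleftrightarrow> (s \<longleftrightarrow> t \<notin> TT k Y)"
    proof (cases "W \<inter> Q = TT k Y")
      case True
      then have "\<forall>t<k. t \<in> W \<longleftrightarrow> (False \<longleftrightarrow> t \<notin> TT k Y)" unfolding Q_def by blast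
      then show ?thesis using that by blast
    next
      case False
      then have "W \<inter> Q = Q - TT k Y" using \<open>separating V Q (TT k Y) W\<close> by (simp add: separating_def)
      then have "\<forall>t<k. t \<in> W \<longleftrightarrow> (True \<longleftrightarrow> t \<notin> TT k Y)" unfolding Q_def by blast
      then show ?thesis using that by blast
    qed
    show ?thesis unfolding cc[OF hW] by (rule sum_mono) (auto simp: h_def)
  qed
  define W0 where "W0 = (Q - TT k Y) \<union> (\<lambda>j. k + j) ` {j\<in>JJ k. real (card (TT k j \<inter> TT k Y)) \<le> a j + real (card (TT k j - TT k Y))}"
  have sepW0: "separating V Q (TT k Y) W0"
    unfolding separating_def W0_def V_def Q_def JJ_def by auto
  have hW0: "\<forall>t<k. t \<in> W0 \<longleftrightarrow> (True \<longleftrightarrow> t \<notin> TT k Y)" unfolding W0_def Q_def by auto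
  have memW0: "k + j \<in> W0 \<longleftrightarrow> real (card (TT k j \<inter> TT k Y)) \<le> a j + real (card (TT k j - TT k Y))"
    if "j \<in> JJ k" for j
    using that unfolding W0_def Q_def by auto
  have costW0: "cut_cost (GE k) (Gc k a) W0 = (\<Sum>j\<in>JJ k. h j)"
    unfolding cc[OF hW0] by (rule sum.cong[OF refl]) (auto simp: memW0 h_def)
  have finW: "finite {W. separating V Q (TT k Y) W}"
    by (rule finite_subset[of _ "Pow V"]) (auto simp: separating_def V_def)
  have "mincut V (GE k) (Gc k a) Q (TT k Y) = (\<Sum>j\<in>JJ k. h j)"
    unfolding mincut_def
    by (rule Min_eqI) (use finW lower sepW0 costW0 in \<open>auto intro!: image_eqI[of _ _ W0]\<close>)
  then show ?thesis using sumh by (simp add: V_def Q_def)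
qed


lemma mincut_span:
  assumes "network V' E' c'" "S \<subseteq> Q" "Q \<subseteq> V'"
  shows "mincut V' E' c' Q S \<in> Q.span (c' ` E')"
proof -
  have fin: "finite {W. separating V' Q S W}"
  proof (rule finite_subset[of _ "Pow V'"])
    show "{W. separating V' Q S W} \<subseteq> Pow V'" by (auto simp: separating_def)
    show "finite (Pow V')" using assms(1) by (simp add: network_def)
  qed
  have ne: "S \<in> {W. separating V' Q S W}" using assms by (auto simp: separating_def)
  have "mincut V' E' c' Q S \<in> cut_cost E' c' ` {W. separating V' Q S W}"
    unfolding mincut_def using fin ne by (intro Min_in finite_imageI) blast+
  moreover have "cut_cost E' c' W \<in> Q.span (c' ` E')" for W
    unfolding cut_cost_def by (rule Q.span_sum, rule Q.span_base, blast)
  ultimately show ?thesis by auto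
qed

lemma card_E:
  assumes "network V' E' c'"
  shows "finite E'" "card E' \<le> card V' * card V'"
proof -
  have sub: "E' \<subseteq> (\<lambda>(u, v). {u, v}) ` (V' \<times> V')"
  proof
    fix e assume "e \<in> E'"
    then obtain u v where "e = {u, v}" "u \<in> V'" "v \<in> V'" using assms unfolding network_def by blast
    then show "e \<in> (\<lambda>(u, v). {u, v}) ` (V' \<times> V')" by auto
  qed
  have fV: "finite V'" using assms by (simp add: network_def)
  show "finite E'" using sub fV finite_subset by blast
  have "card E' \<le> card ((\<lambda>(u, v). {u, v}) ` (V' \<times> V'))" using sub fV by (intro card_mono) auto
  also have "\<dots> \<le> card (V' \<times> V')" using fV by (intro card_image_le) auto
  finally show "card E' \<le> card V' * card V'" by (simp add: card_cartesian_product)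
qed


lemma final_arith:
  fixes k m n :: nat
  assumes "k > 5" "m = (k - 1) div 2" "2 ^ m \<le> n * n"
  shows "2 powr (1/6 * real k) \<le> real n"
proof (rule ccontr)
  assume "\<not> ?thesis"
  then have lt: "real n < 2 powr (1/6 * real k)" by simp
  have "2 * m + 2 \<ge> k" using assms(2) by presburger
  then have "real k / 3 \<le> real m" using assms(1) by linarith
  then have "2 powr (real k / 3) \<le> 2 powr real m" by simp
  also have "\<dots> = 2 ^ m" by (simp add: powr_realpow)
  also have "\<dots> \<le> real n * real n" using assms(3) by (metis of_nat_le_iff of_nat_mult of_nat_numeral of_nat_power)
  also have "\<dots> < 2 powr (1/6 * real k) * 2 powr (1/6 * real k)"
    using lt by (intro mult_strict_mono) auto
  also have "\<dots> = 2 powr (real k / 3)" by (simp add: powr_add[symmetric])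
  finally show False by simp
qed

theorem theorem1p2:
  shows "\<exists>\<alpha>::real. \<alpha> > 0 \<and>
    (\<forall>k::nat. k > 5 \<longrightarrow>
      (\<exists>(V::nat set) E c Q. network V E c \<and> Q \<subseteq> V \<and> card Q = k \<and>
         (\<forall>e\<in>E. card (e \<inter> Q) = 1) \<and>
         (\<forall>V' E' c'. mimicking V E c Q V' E' c' \<longrightarrow> real (card V') \<ge> 2 powr (\<alpha> * real k))))"
proof (intro exI[of _ "1/6"] conjI allI impI)
  show "(0::real) < 1/6" by simp
  fix k :: nat assume k: "k > 5"
  define zz where "zz Y = (\<Sum>j\<in>JJ k - {Y}. real (card (TT k j \<inter> TT k Y)))" for Y
  define lo where "lo Y = zz Y + real (card (TT k Y)) - 1" for Y
  have finJ: "finite (JJ k)" by (simp add: JJ_def)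
  obtain p where p: "inj_on p (JJ k)" "Q.independent (p ` JJ k)"
    "\<forall>j\<in>JJ k. lo j < p j \<and> p j < lo j + 1"
    using choose_indep[OF finJ, of lo] by blast
  define a where "a Y = p Y - zz Y" for Y
  have ab: "\<forall>j\<in>JJ k. real (card (TT k j)) - 1 < a j \<and> a j < real (card (TT k j))"
    using p(3) by (auto simp: a_def lo_def)
  have apos: "a j > 0" if "j \<in> JJ k" for j
  proof -
    have "card (TT k j) \<noteq> 0" using TT_ne[OF k] by simp
    then show ?thesis using ab that by fastforce
  qed
  define V where "V = {..<k + 2 ^ mm k}"
  define Q where "Q = {..<k}"
  have k0: "k > 0" using k by simp
  have net: "network V (GE k) (Gc k a)"
    unfolding network_def
  proof (intro conjI ballI)
    show "finite V" by (simp add: V_def)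
  next
    fix e assume "e \<in> GE k"
    then obtain j t where e: "e = {t, k + j}" "j \<in> JJ k" "t \<in> NN k j" unfolding GE_def by auto
    then have "t < k" using NN_lt k0 by blast
    then show "\<exists>u v. e = {u, v} \<and> u \<noteq> v \<and> u \<in> V \<and> v \<in> V"
    proof -
      have "t \<noteq> k + j" "t \<in> V" "k + j \<in> V" using \<open>t < k\<close> e(2) by (auto simp: V_def JJ_def)
      then have h: "e = {t, k + j} \<and> t \<noteq> k + j \<and> t \<in> V \<and> k + j \<in> V" using e(1) by blast
      show ?thesis by (rule exI[of _ t], rule exI[of _ "k + j"], rule h)
    qed
  next
    fix e assume "e \<in> GE k"
    then obtain j t where e: "e = {t, k + j}" "j \<in> JJ k" "t \<in> NN k j" unfolding GE_def by auto
    show "0 < Gc k a e"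
    proof (cases "t = 0")
      case True then show ?thesis using e apos Gc0[OF k0] by simp
    next
      case False then have "t \<in> TT k j" using e by (simp add: NN_def)
      then show ?thesis using e Gc1[OF _ k0] by simp
    qed
  qed
  show "\<exists>(V::nat set) E c Q. network V E c \<and> Q \<subseteq> V \<and> card Q = k \<and>
         (\<forall>e\<in>E. card (e \<inter> Q) = 1) \<and>
         (\<forall>V' E' c'. mimicking V E c Q V' E' c' \<longrightarrow> real (card V') \<ge> 2 powr (1/6 * real k))"
  proof (intro exI conjI allI impI)
    show "network V (GE k) (Gc k a)" by (rule net)
    show "Q \<subseteq> V" by (auto simp: Q_def V_def)
    show "card Q = k" by (simp add: Q_def)
    show "\<forall>e\<in>GE k. card (e \<inter> Q) = 1"
    proof
      fix e assume "e \<in> GE k"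
      then obtain j t where e: "e = {t, k + j}" "j \<in> JJ k" "t \<in> NN k j" unfolding GE_def by auto
      then have "t < k" using NN_lt k0 by blast
      then have "e \<inter> Q = {t}" using e by (auto simp: Q_def)
      then show "card (e \<inter> Q) = 1" by simp
    qed
    fix V' E' c' assume mim: "mimicking V (GE k) (Gc k a) Q V' E' c'"
    then have net': "network V' E' c'" and QV': "Q \<subseteq> V'" by (auto simp: mimicking_def)
    have sub: "p ` JJ k \<subseteq> Q.span (c' ` E')"
    proof
      fix x assume "x \<in> p ` JJ k"
      then obtain Y where Y: "Y \<in> JJ k" "x = p Y" by blast
      have TQ: "TT k Y \<subseteq> Q" using TT_lt unfolding Q_def by auto
      have Tne: "TT k Y \<noteq> {}" using TT_ne[OF k] by simp
      have "0 \<in> Q" using k by (simp add: Q_def)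
      then have TnQ: "TT k Y \<noteq> Q" using TT_lt(2)[of 0 k Y] by metis
      have "mincut V' E' c' Q (TT k Y) = mincut V (GE k) (Gc k a) Q (TT k Y)"
      proof -
        have "\<forall>S. S \<subseteq> Q \<and> S \<noteq> {} \<and> S \<noteq> Q \<longrightarrow> mincut V' E' c' Q S = mincut V (GE k) (Gc k a) Q S"
          using mim unfolding mimicking_def by (elim conjE)
        then show ?thesis using TQ Tne TnQ by simp
      qed
      also have "\<dots> = p Y"
        unfolding V_def Q_def mincut_G[OF k Y(1) ab] by (simp add: a_def zz_def)
      finally have "p Y = mincut V' E' c' Q (TT k Y)" by simp
      then show "x \<in> Q.span (c' ` E')" using mincut_span[OF net' TQ QV'] Y by simp
    qed
    have "card (p ` JJ k) \<le> card (c' ` E')"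
      using Q.independent_span_bound[OF _ p(2) sub] card_E(1)[OF net'] by blast
    also have "\<dots> \<le> card E'" using card_E(1)[OF net'] by (rule card_image_le)
    also have "\<dots> \<le> card V' * card V'" by (rule card_E(2)[OF net'])
    finally have "2 ^ mm k \<le> card V' * card V'"
      using card_image[OF p(1)] by (simp add: JJ_def)
    then show "2 powr (1/6 * real k) \<le> real (card V')"
      using final_arith[OF k mm_def] by blast
  qed
qed

end
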